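(* Let $G=(V,W,E)$ be a bipartite graph with parts $V$ and $W$ such that (1) $|N(v)|=3$ for all $v\in V$, (2) $G$ is odd, (3) $G$ is rigid, and (4) there are no distinct $w_1,w_2\in W$ with $N_G^{2}(w_1)=N_G^{2}(w_2)$. Then the graph $R(G)$ is rigid.
   Context: All graphs are finite, simple and undirected; $N(v)$ denotes the neighbourhood of $v$. A graph is rigid if its only automorphism is the identity. A bipartite graph $G=(V,W,E)$ in which every vertex of $V$ has degree $3$ is called odd if for every nonempty $X\subseteq W$ there is some $v\in V$ such that $|X\cap N(v)|$ is odd. The second neighbourhood of a vertex $v$ is $N_G^{2}(v)=\{u\in V(G): u\neq v \text{ and there is } w \text{ with } \{v,w\},\{w,u\}\in E(G)\}$. The graph $R(G)$ is defined as follows: for each $w\in W$ it has two vertices $a(w),b(w)$; for each $v\in V$, with its three neighbours listed in a fixed order $w_1,w_2,w_3$, it has four vertices $m_x(v)$, $x=(x_1,x_2,x_3)\in\{0,1\}^3$ with an even number of ones, where $m_x(v)$ is adjacent to $a(w_j)$ if $x_j=0$ and to $b(w_j)$ if $x_j=1$, for $j=1,2,3$; there are no other edges. *)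

theory Defs
  imports Main
begin

definition automorphism :: "'a set \<Rightarrow> ('a \<Rightarrow> 'a \<Rightarrow> bool) \<Rightarrow> ('a \<Rightarrow> 'a) \<Rightarrow> bool" where
  "automorphism X Adj f \<longleftrightarrow>
     bij_betw f X X \<and> (\<forall>x\<in>X. \<forall>y\<in>X. Adj (f x) (f y) \<longleftrightarrow> Adj x y)"

definition rigid :: "'a set \<Rightarrow> ('a \<Rightarrow> 'a \<Rightarrow> bool) \<Rightarrow> bool" where
  "rigid X Adj \<longleftrightarrow> (\<forall>f. automorphism X Adj f \<longrightarrow> (\<forall>x\<in>X. f x = x))"

definition second_nbhd :: "'a set \<Rightarrow> ('a \<Rightarrow> 'a \<Rightarrow> bool) \<Rightarrow> 'a \<Rightarrow> 'a set" where
  "second_nbhd X Adj v = {u\<in>X. u \<noteq> v \<and> (\<exists>w\<in>X. Adj v w \<and> Adj w u)}"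

definition bip_verts :: "'v set \<Rightarrow> 'w set \<Rightarrow> ('v + 'w) set" where
  "bip_verts V W = Inl ` V \<union> Inr ` W"

fun bip_adj :: "('v \<times> 'w) set \<Rightarrow> ('v + 'w) \<Rightarrow> ('v + 'w) \<Rightarrow> bool" where
  "bip_adj E (Inl v) (Inr w) = ((v, w) \<in> E)"
| "bip_adj E (Inr w) (Inl v) = ((v, w) \<in> E)"
| "bip_adj E _ _ = False"

definition NV :: "('v \<times> 'w) set \<Rightarrow> 'v \<Rightarrow> 'w set" where
  "NV E v = {w. (v, w) \<in> E}"

definition odd_bip :: "'v set \<Rightarrow> 'w set \<Rightarrow> ('v \<times> 'w) set \<Rightarrow> bool" where
  "odd_bip V W E \<longleftrightarrow>
     (\<forall>X. X \<subseteq> W \<and> X \<noteq> {} \<longrightarrow> (\<exists>v\<in>V. odd (card (X \<inter> NV E v))))"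

datatype ('v, 'w) rvert = RA 'w | RB 'w | RM 'v "bool \<times> bool \<times> bool"

fun comp :: "bool \<times> bool \<times> bool \<Rightarrow> nat \<Rightarrow> bool" where
  "comp (a, b, c) j = (if j = 1 then a else if j = 2 then b else c)"

definition even_vec :: "bool \<times> bool \<times> bool \<Rightarrow> bool" where
  "even_vec x \<longleftrightarrow> even (card {j\<in>{1,2,3::nat}. comp x j})"

definition R_verts :: "'v set \<Rightarrow> 'w set \<Rightarrow> ('v, 'w) rvert set" where
  "R_verts V W = RA ` W \<union> RB ` W \<union> {RM v x | v x. v \<in> V \<and> even_vec x}"

text \<open>ord v j (j = 1,2,3) is the fixed ordering of the neighbours of v.\<close>
fun R_edge :: "('v \<Rightarrow> nat \<Rightarrow> 'w) \<Rightarrow> ('v, 'w) rvert \<Rightarrow> ('v, 'w) rvert \<Rightarrow> bool" where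
  "R_edge ord (RM v x) (RA w) = (\<exists>j\<in>{1,2,3}. ord v j = w \<and> \<not> comp x j)"
| "R_edge ord (RM v x) (RB w) = (\<exists>j\<in>{1,2,3}. ord v j = w \<and> comp x j)"
| "R_edge ord _ _ = False"

definition R_adj :: "('v \<Rightarrow> nat \<Rightarrow> 'w) \<Rightarrow> ('v, 'w) rvert \<Rightarrow> ('v, 'w) rvert \<Rightarrow> bool" where
  "R_adj ord p q \<longleftrightarrow> R_edge ord p q \<or> R_edge ord q p"

end

theory Submission imports Defs begin

definition AB :: "bool \<Rightarrow> 'w \<Rightarrow> ('v,'w) rvert" where
  "AB b w = (if b then RB w else RA w)"

lemma RA_AB: "RA w = AB False w" and RB_AB: "RB w = AB True w"
  by (simp_all add: AB_def)

lemma AB_inject[simp]: "AB b w = AB b' w' \<longleftrightarrow> b = b' \<and> w = w'"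
  by (auto simp: AB_def)

lemma AB_RM[simp]: "AB b w \<noteq> RM v x" "RM v x \<noteq> AB b w"
  by (auto simp: AB_def)

lemma adj_M_AB[simp]: "R_adj ord (RM v x) (AB b w) \<longleftrightarrow> (\<exists>j\<in>{1,2,3}. ord v j = w \<and> comp x j = b)"
  by (cases b) (auto simp: R_adj_def AB_def)

lemma adj_AB_M[simp]: "R_adj ord (AB b w) (RM v x) \<longleftrightarrow> (\<exists>j\<in>{1,2,3}. ord v j = w \<and> comp x j = b)"
  by (cases b) (auto simp: R_adj_def AB_def)

lemma adj_AB_AB[simp]: "\<not> R_adj ord (AB b w) (AB b' w')"
  by (cases b; cases b') (auto simp: R_adj_def AB_def)

lemma adj_M_M[simp]: "\<not> R_adj ord (RM v x) (RM v' x')"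
  by (auto simp: R_adj_def)

lemma rvert_cases: obtains b w where "u = AB b w" | v x where "u = RM v x"
  by (cases u) (metis RA_AB, metis RB_AB, auto)

lemma R_verts_AB[simp]: "AB b w \<in> R_verts V W \<longleftrightarrow> w \<in> W"
  by (cases b) (auto simp: R_verts_def AB_def)

lemma R_verts_M[simp]: "RM v x \<in> R_verts V W \<longleftrightarrow> v \<in> V \<and> even_vec x"
  unfolding R_verts_def by blast

lemma set123: "{j\<in>{1,2,3::nat}. P j} = (if P 1 then {1} else {}) \<union> (if P 2 then {2} else {}) \<union> (if P 3 then {3} else {})"
  by auto

lemma even_vec_iff: "even_vec x \<longleftrightarrow> x \<in> {(False,False,False),(False,True,True),(True,False,True),(True,True,False)}"
proof -
  obtain a b c where x: "x = (a,b,c)" by (cases x) auto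
  show ?thesis unfolding x even_vec_def set123 by (cases a; cases b; cases c) simp_all
qed

lemma collect_insert: "{x. x \<in> insert a A \<and> P x} = (if P a then insert a {x. x \<in> A \<and> P x} else {x. x \<in> A \<and> P x})"
  by auto

lemma ex_vec: assumes "j\<in>{1,2,3}" "k\<in>{1,2,3}" "j\<noteq>k"
  shows "\<exists>x. even_vec x \<and> comp x j = p \<and> comp x k = q"
proof -
  have "j=1 \<and> k=2 \<or> j=1 \<and> k=3 \<or> j=2 \<and> k=1 \<or> j=2 \<and> k=3 \<or> j=3 \<and> k=1 \<or> j=3 \<and> k=2"
    using assms by auto
  then show ?thesis
    apply (elim disjE conjE)
         apply (rule exI[of _ "(p,q,p\<noteq>q)"]; cases p; cases q; simp add: even_vec_iff)
        apply (rule exI[of _ "(p,p\<noteq>q,q)"]; cases p; cases q; simp add: even_vec_iff)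
       apply (rule exI[of _ "(q,p,p\<noteq>q)"]; cases p; cases q; simp add: even_vec_iff)
      apply (rule exI[of _ "(p\<noteq>q,p,q)"]; cases p; cases q; simp add: even_vec_iff)
     apply (rule exI[of _ "(q,p\<noteq>q,p)"]; cases p; cases q; simp add: even_vec_iff)
    apply (rule exI[of _ "(p\<noteq>q,q,p)"]; cases p; cases q; simp add: even_vec_iff)
    done
qed

lemma even_filter: "{x. even_vec x \<and> P x} = set (filter P [(False,False,False),(False,True,True),(True,False,True),(True,True,False)])"
  unfolding even_vec_iff set_filter by simp

lemma card_vec: assumes "j\<in>{1,2,3}" shows "card {x. even_vec x \<and> comp x j = b} = 2"
proof -
  have "j = 1 \<or> j = 2 \<or> j = 3" using assms by auto
  then show ?thesis unfolding even_filter
    by (elim disjE; cases b; simp add: distinct_card[symmetric])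
qed

lemma parity_xy: assumes "even_vec x" "even_vec y"
  shows "even (card {j\<in>{1,2,3::nat}. comp x j \<noteq> comp y j})"
  using assms unfolding even_vec_iff set123 by (elim insertE emptyE; simp)

lemma parity_vec: assumes "even_vec x" "even_vec y" "\<forall>j\<in>{1,2,3}. comp y j = (comp x j \<noteq> d j)"
  shows "even (card {j\<in>{1,2,3::nat}. d j})"
proof -
  have "{j\<in>{1,2,3::nat}. d j} = {j\<in>{1,2,3::nat}. comp x j \<noteq> comp y j}"
    using assms(3) by auto
  then show ?thesis using parity_xy[OF assms(1,2)] by simp
qed

lemma comp_ext: "(\<forall>j\<in>{1,2,3}. comp x j = comp y j) \<Longrightarrow> x = y"
  by (cases x; cases y) auto

lemma even0: "even_vec (False,False,False)" by (simp add: even_vec_iff)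


lemma aut_adj: "automorphism X A f \<Longrightarrow> x \<in> X \<Longrightarrow> y \<in> X \<Longrightarrow> A (f x) (f y) \<longleftrightarrow> A x y"
  by (simp add: automorphism_def)

lemma aut_in: "automorphism X A f \<Longrightarrow> x \<in> X \<Longrightarrow> f x \<in> X"
  by (auto simp: automorphism_def bij_betw_def)

lemma aut_inj: "automorphism X A f \<Longrightarrow> x \<in> X \<Longrightarrow> y \<in> X \<Longrightarrow> f x = f y \<longleftrightarrow> x = y"
  by (auto simp: automorphism_def bij_betw_def inj_on_def)

lemma aut_surj: "automorphism X A f \<Longrightarrow> z \<in> X \<Longrightarrow> \<exists>y\<in>X. z = f y"
  by (auto simp: automorphism_def bij_betw_def)

lemma aut_nbhd: assumes "automorphism X A f" "u \<in> X"
  shows "{y\<in>X. A (f u) y} = f ` {y\<in>X. A u y}"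
proof
  show "{y\<in>X. A (f u) y} \<subseteq> f ` {y\<in>X. A u y}"
  proof
    fix z assume z: "z \<in> {y\<in>X. A (f u) y}"
    then have zX: "z \<in> X" "A (f u) z" by simp_all
    obtain y where y: "y \<in> X" "z = f y" using aut_surj[OF assms(1) zX(1)] by blast
    have "A (f u) (f y)" using zX(2) y(2) by simp
    then have "A u y" using aut_adj[OF assms(1) assms(2) y(1)] by simp
    then show "z \<in> f ` {y\<in>X. A u y}" unfolding y(2) using y(1) by blast
  qed
  show "f ` {y\<in>X. A u y} \<subseteq> {y\<in>X. A (f u) y}"
  proof
    fix z assume "z \<in> f ` {y\<in>X. A u y}"
    then obtain y where y: "y \<in> X" "A u y" "z = f y" by blast
    have "A (f u) (f y)" using aut_adj[OF assms(1) assms(2) y(1)] y(2) by simp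
    moreover have "f y \<in> X" using aut_in[OF assms(1) y(1)] .
    ultimately show "z \<in> {y\<in>X. A (f u) y}" using y(3) by simp
  qed
qed

lemma aut_card_nbhd: assumes "automorphism X A f" "u \<in> X"
  shows "card {y\<in>X. A (f u) y} = card {y\<in>X. A u y}"
proof -
  have "inj_on f X" using assms(1) unfolding automorphism_def bij_betw_def by simp
  then have "inj_on f {y\<in>X. A u y}" by (rule inj_on_subset) auto
  then show ?thesis using aut_nbhd[OF assms] by (simp add: card_image)
qed

lemma aut_second: assumes "automorphism X A f" "u \<in> X"
  shows "second_nbhd X A (f u) = f ` second_nbhd X A u"
proof
  show "second_nbhd X A (f u) \<subseteq> f ` second_nbhd X A u"
  proof
    fix z assume z: "z \<in> second_nbhd X A (f u)"
    then obtain w where w: "w \<in> X" "A (f u) w" "A w z" "z \<in> X" "z \<noteq> f u"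
      unfolding second_nbhd_def by blast
    obtain y where y: "y \<in> X" "z = f y" using aut_surj[OF assms(1) w(4)] by blast
    obtain w' where w': "w' \<in> X" "w = f w'" using aut_surj[OF assms(1) w(1)] by blast
    have "y \<in> second_nbhd X A u" unfolding second_nbhd_def
      using w y w' aut_adj[OF assms(1)] assms(2) by auto
    then show "z \<in> f ` second_nbhd X A u" using y by auto
  qed
  show "f ` second_nbhd X A u \<subseteq> second_nbhd X A (f u)"
  proof
    fix z assume "z \<in> f ` second_nbhd X A u"
    then obtain y w where y: "z = f y" "y \<in> X" "y \<noteq> u" "w \<in> X" "A u w" "A w y"
      unfolding second_nbhd_def by blast
    have 1: "f y \<in> X" "f w \<in> X" using y aut_in[OF assms(1)] by auto
    have 2: "f y \<noteq> f u" using y aut_inj[OF assms(1) y(2) assms(2)] by auto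
    have 3: "A (f u) (f w)" "A (f w) (f y)"
      using y aut_adj[OF assms(1) assms(2) y(4)] aut_adj[OF assms(1) y(4) y(2)] by auto
    show "z \<in> second_nbhd X A (f u)" unfolding y(1) second_nbhd_def
      using 1 2 3 by blast
  qed
qed

fun wof :: "('v,'w) rvert \<Rightarrow> 'w" where
  "wof (RA w) = w" | "wof (RB w) = w" | "wof (RM v x) = undefined"

lemma wof_AB[simp]: "wof (AB b w) = w" by (cases b) (auto simp: AB_def)

fun vof :: "('v,'w) rvert \<Rightarrow> 'v" where
  "vof (RM v x) = v" | "vof _ = undefined"

locale setting =
  fixes V :: "'v set" and W :: "'w set" and E :: "('v \<times> 'w) set"
    and ord :: "'v \<Rightarrow> nat \<Rightarrow> 'w" and f :: "('v,'w) rvert \<Rightarrow> ('v,'w) rvert"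
  assumes finV: "finite V" and finW: "finite W" and EVW: "E \<subseteq> V \<times> W"
    and ordA: "\<forall>v\<in>V. inj_on (ord v) {1,2,3} \<and> ord v ` {1,2,3} = NV E v"
    and oddG: "odd_bip V W E"
    and rigG: "rigid (bip_verts V W) (bip_adj E)"
    and n2: "\<forall>w1\<in>W. \<forall>w2\<in>W. w1 \<noteq> w2 \<longrightarrow>
           second_nbhd (bip_verts V W) (bip_adj E) (Inr w1)
             \<noteq> second_nbhd (bip_verts V W) (bip_adj E) (Inr w2)"
    and aut: "automorphism (R_verts V W) (R_adj ord) f"
begin

abbreviation "RV \<equiv> R_verts V W"
abbreviation "Adj \<equiv> R_adj ord"
abbreviation "GV \<equiv> bip_verts V W"
abbreviation "GA \<equiv> bip_adj E"

lemma NV_sub: "NV E v \<subseteq> W" using EVW by (auto simp: NV_def)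

lemma NV_iff: assumes "v \<in> V" shows "w \<in> NV E v \<longleftrightarrow> (\<exists>j\<in>{1,2,3}. ord v j = w)"
proof -
  have "NV E v = ord v ` {1,2,3}" using ordA assms by simp
  then show ?thesis by auto
qed

lemma ord_W: assumes "v \<in> V" "j \<in> {1,2,3}" shows "ord v j \<in> W"
proof -
  have "ord v j \<in> NV E v" using NV_iff[OF assms(1), of "ord v j"] assms(2) by blast
  then show ?thesis using NV_sub by blast
qed

lemma ord_inj: "v \<in> V \<Longrightarrow> j \<in> {1,2,3} \<Longrightarrow> k \<in> {1,2,3} \<Longrightarrow> ord v j = ord v k \<Longrightarrow> j = k"
  using ordA unfolding inj_on_def by blast

lemma inE: "(v,w) \<in> E \<longleftrightarrow> v \<in> V \<and> w \<in> NV E v"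
  using EVW by (auto simp: NV_def)

lemma GV_Inr[simp]: "Inr w \<in> GV \<longleftrightarrow> w \<in> W" by (auto simp: bip_verts_def)
lemma GV_Inl[simp]: "Inl v \<in> GV \<longleftrightarrow> v \<in> V" by (auto simp: bip_verts_def)

lemma nbhd_M: assumes "v \<in> V" "even_vec x"
  shows "{y\<in>RV. Adj (RM v x) y} = (\<lambda>j. AB (comp x j) (ord v j)) ` {1,2,3}"
proof
  show "{y\<in>RV. Adj (RM v x) y} \<subseteq> (\<lambda>j. AB (comp x j) (ord v j)) ` {1,2,3}"
  proof
    fix y assume y: "y \<in> {y\<in>RV. Adj (RM v x) y}"
    show "y \<in> (\<lambda>j. AB (comp x j) (ord v j)) ` {1,2,3}"
    proof (cases y rule: rvert_cases)
      case (1 b w)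
      then show ?thesis using y by auto
    next
      case (2 v x)
      then show ?thesis using y by auto
    qed
  qed
  show "(\<lambda>j. AB (comp x j) (ord v j)) ` {1,2,3} \<subseteq> {y\<in>RV. Adj (RM v x) y}"
    using ord_W[OF assms(1)] by auto
qed

lemma card_M: assumes "v \<in> V" "even_vec x"
  shows "card {y\<in>RV. Adj (RM v x) y} = 3"
proof -
  have "inj_on (\<lambda>j. AB (comp x j) (ord v j)) {1,2,3}"
  proof (rule inj_onI)
    fix j k assume jk: "j \<in> {1,2,3}" "k \<in> {1,2,3}" "AB (comp x j) (ord v j) = AB (comp x k) (ord v k)"
    then have "ord v j = ord v k" by simp
    then show "j = k" using ord_inj[OF assms(1) jk(1,2)] by blast
  qed
  then show ?thesis unfolding nbhd_M[OF assms] by (simp add: card_image)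
qed

lemma card_AB: assumes "w \<in> W"
  shows "even (card {y\<in>RV. Adj (AB b w) y})"
proof -
  define Vw where "Vw = {v\<in>V. w \<in> NV E v}"
  define B where "B v = {x. even_vec x \<and> (\<exists>j\<in>{1,2,3}. ord v j = w \<and> comp x j = b)}" for v
  have eq: "{y\<in>RV. Adj (AB b w) y} = (\<lambda>(v,x). RM v x) ` (SIGMA v:Vw. B v)"
  proof
    show "{y\<in>RV. Adj (AB b w) y} \<subseteq> (\<lambda>(v,x). RM v x) ` (SIGMA v:Vw. B v)"
    proof
      fix y assume y: "y \<in> {y\<in>RV. Adj (AB b w) y}"
      show "y \<in> (\<lambda>(v,x). RM v x) ` (SIGMA v:Vw. B v)"
      proof (cases y rule: rvert_cases)
        case (1 b w)
        then show ?thesis using y by auto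
      next
        case (2 v x)
        then have h: "v \<in> V" "even_vec x" "\<exists>j\<in>{1,2,3}. ord v j = w \<and> comp x j = b" using y by auto
        then have "w \<in> NV E v" using NV_iff[OF h(1), of w] by blast
        then have "(v,x) \<in> (SIGMA v:Vw. B v)" using h unfolding Vw_def B_def by simp
        then show ?thesis unfolding 2 by (rule rev_image_eqI) simp
      qed
    qed
    show "(\<lambda>(v,x). RM v x) ` (SIGMA v:Vw. B v) \<subseteq> {y\<in>RV. Adj (AB b w) y}"
      using assms unfolding Vw_def B_def by auto
  qed
  have inj: "inj_on (\<lambda>(v,x). RM v x) (SIGMA v:Vw. B v)" by (auto simp: inj_on_def)
  have B2: "card (B v) = 2" if "v \<in> Vw" for v
  proof -
    have v: "v \<in> V" "w \<in> NV E v" using that unfolding Vw_def by simp_all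
    obtain j where j: "j \<in> {1,2,3}" "ord v j = w" using NV_iff[OF v(1), of w] v(2) by blast
    have eqj: "(\<exists>j'\<in>{1,2,3}. ord v j' = w \<and> comp x j' = b) \<longleftrightarrow> comp x j = b" for x
    proof
      assume "\<exists>j'\<in>{1,2,3}. ord v j' = w \<and> comp x j' = b"
      then obtain j' where j': "j' \<in> {1,2,3}" "ord v j' = w" "comp x j' = b" by blast
      have "j' = j" using ord_inj[OF v(1) j'(1) j(1)] j'(2) j(2) by simp
      then show "comp x j = b" using j'(3) by simp
    next
      assume "comp x j = b" then show "\<exists>j'\<in>{1,2,3}. ord v j' = w \<and> comp x j' = b" using j by blast
    qed
    have "B v = {x. even_vec x \<and> comp x j = b}"
      unfolding B_def using eqj by simp
    then show ?thesis using card_vec[OF j(1)] by simp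
  qed
  have "card (SIGMA v:Vw. B v) = (\<Sum>v\<in>Vw. card (B v))"
    by (rule card_SigmaI) (use finV in \<open>auto simp: Vw_def\<close>)
  also have "\<dots> = (\<Sum>v\<in>Vw. 2)" using B2 by simp
  finally show ?thesis unfolding eq card_image[OF inj] by simp
qed

lemma f_M: assumes "v \<in> V" "even_vec x"
  obtains v' y where "f (RM v x) = RM v' y" "v' \<in> V" "even_vec y"
proof -
  have in1: "RM v x \<in> RV" using assms by simp
  have fin: "f (RM v x) \<in> RV" using aut_in[OF aut in1] .
  have c: "card {y\<in>RV. Adj (f (RM v x)) y} = 3"
    using aut_card_nbhd[OF aut in1] card_M[OF assms] by simp
  show ?thesis
  proof (cases "f (RM v x)" rule: rvert_cases)
    case (1 b w)
    then show ?thesis using c card_AB[of w b] fin by auto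
  next
    case (2 v' y)
    then show ?thesis using that fin by auto
  qed
qed

lemma f_AB: assumes "w \<in> W"
  obtains b' w' where "f (AB b w) = AB b' w'" "w' \<in> W"
proof -
  have in1: "AB b w \<in> RV" using assms by simp
  have fin: "f (AB b w) \<in> RV" using aut_in[OF aut in1] .
  have c: "even (card {y\<in>RV. Adj (f (AB b w)) y})"
    using aut_card_nbhd[OF aut in1] card_AB[OF assms] by simp
  show ?thesis
  proof (cases "f (AB b w)" rule: rvert_cases)
    case (1 b' w')
    then show ?thesis using that fin by auto
  next
    case (2 v' y)
    then show ?thesis using c card_M[of v' y] fin by auto
  qed
qed

end

context setting begin

lemma secG_Inl: "Inl v \<notin> second_nbhd GV GA (Inr w)"
proof
  assume "Inl v \<in> second_nbhd GV GA (Inr w)"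
  then obtain z where "GA (Inr w) z" "GA z (Inl v)" unfolding second_nbhd_def by blast
  then show False by (cases z) auto
qed

lemma secR_M: "RM v x \<notin> second_nbhd RV Adj (AB b w)"
proof
  assume "RM v x \<in> second_nbhd RV Adj (AB b w)"
  then obtain z where "Adj (AB b w) z" "Adj z (RM v x)" unfolding second_nbhd_def by blast
  then show False by (cases z rule: rvert_cases) auto
qed

lemma sec_AB: assumes "w \<in> W" "w' \<in> W"
  shows "AB b' w' \<in> second_nbhd RV Adj (AB b w) \<longleftrightarrow> Inr w' \<in> second_nbhd GV GA (Inr w)"
proof
  assume h: "AB b' w' \<in> second_nbhd RV Adj (AB b w)"
  have h': "(AB b' w' :: ('v,'w) rvert) \<noteq> AB b w \<and> (\<exists>z\<in>RV. Adj (AB b w) z \<and> Adj z (AB b' w'))"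
    using h unfolding second_nbhd_def mem_Collect_eq by (rule conjunct2)
  then obtain z where z: "z \<in> RV" "Adj (AB b w) z" "Adj z (AB b' w')" "(AB b' w' :: ('v,'w) rvert) \<noteq> AB b w"
    by blast
  then obtain v x where vx: "z = RM v x" by (cases z rule: rvert_cases) auto
  with z obtain j k where jk: "j\<in>{1,2,3}" "k\<in>{1,2,3}" "ord v j = w" "comp x j = b"
    "ord v k = w'" "comp x k = b'" "v \<in> V" by auto
  have "w \<noteq> w'"
  proof
    assume "w = w'"
    then have "j = k" using ord_inj jk by metis
    then show False using jk z(4) \<open>w = w'\<close> by auto
  qed
  moreover have "w \<in> NV E v" "w' \<in> NV E v"
    using NV_iff[OF jk(7), of w] NV_iff[OF jk(7), of w'] jk(1-5) by blast+
  then have "(v,w) \<in> E" "(v,w') \<in> E"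
    using inE[of v w, THEN iffD2] inE[of v w', THEN iffD2] jk(7) by blast+
  then have "GA (Inr w) (Inl v)" "GA (Inl v) (Inr w')" by simp_all
  moreover have "Inr w' \<in> GV" "Inl v \<in> GV" using assms jk(7) by simp_all
  ultimately show "Inr w' \<in> second_nbhd GV GA (Inr w)"
    unfolding second_nbhd_def by blast
next
  assume h: "Inr w' \<in> second_nbhd GV GA (Inr w)"
  have h': "(Inr w' :: 'v + 'w) \<noteq> Inr w \<and> (\<exists>z\<in>GV. GA (Inr w) z \<and> GA z (Inr w'))"
    using h unfolding second_nbhd_def mem_Collect_eq by (rule conjunct2)
  then obtain z where z: "z \<in> GV" "GA (Inr w) z" "GA z (Inr w')" "w' \<noteq> w"
    by auto
  then obtain v where v: "z = Inl v" by (cases z) auto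
  have e1: "(v,w) \<in> E" using z(2) v by simp
  have e2: "(v,w') \<in> E" using z(3) v by simp
  have c1: "v \<in> V \<and> w \<in> NV E v" using e1 by (rule inE[THEN iffD1])
  have c2: "v \<in> V \<and> w' \<in> NV E v" using e2 by (rule inE[THEN iffD1])
  have vE: "v \<in> V" "w \<in> NV E v" "w' \<in> NV E v"
    using c1 c2 by blast+
  obtain j where j: "j\<in>{1,2,3}" "ord v j = w" using NV_iff[OF vE(1), of w] vE(2) by blast
  obtain k where k: "k\<in>{1,2,3}" "ord v k = w'" using NV_iff[OF vE(1), of w'] vE(3) by blast
  have jk: "j\<in>{1,2,3}" "k\<in>{1,2,3}" "ord v j = w" "ord v k = w'" using j k by simp_all
  then have "j \<noteq> k" using z(4) by auto
  then obtain x where x: "even_vec x" "comp x j = b" "comp x k = b'"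
    using ex_vec[OF jk(1,2)] by blast
  have "RM v x \<in> RV" "Adj (AB b w) (RM v x)" "Adj (RM v x) (AB b' w')"
    using x vE jk by auto
  moreover have "AB b' w' \<in> RV" "(AB b' w' :: ('v,'w) rvert) \<noteq> AB b w" using assms z(4) by simp_all
  ultimately show "AB b' w' \<in> second_nbhd RV Adj (AB b w)"
    unfolding second_nbhd_def by blast
qed

lemma sec_same: assumes "w \<in> W"
  shows "second_nbhd RV Adj (AB b w) = second_nbhd RV Adj (AB b' w)"
proof (rule set_eqI)
  fix z show "z \<in> second_nbhd RV Adj (AB b w) \<longleftrightarrow> z \<in> second_nbhd RV Adj (AB b' w)"
  proof (cases z rule: rvert_cases)
    case (1 c u)
    show ?thesis
    proof (cases "u \<in> W")
      case True
      then show ?thesis using 1 sec_AB[OF assms True] by simp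
    next
      case False
      then show ?thesis using 1 unfolding second_nbhd_def by simp
    qed
  next
    case (2 v x)
    then show ?thesis using secR_M by simp
  qed
qed

lemma sec_det: assumes "w1 \<in> W" "w2 \<in> W"
  and eq: "second_nbhd RV Adj (AB b1 w1) = second_nbhd RV Adj (AB b2 w2)"
  shows "w1 = w2"
proof (rule ccontr)
  assume ne: "w1 \<noteq> w2"
  have "second_nbhd GV GA (Inr w1) = second_nbhd GV GA (Inr w2)"
  proof (rule set_eqI)
    fix z show "z \<in> second_nbhd GV GA (Inr w1) \<longleftrightarrow> z \<in> second_nbhd GV GA (Inr w2)"
    proof (cases z)
      case (Inl v) then show ?thesis using secG_Inl by simp
    next
      case (Inr u)
      show ?thesis
      proof (cases "u \<in> W")
        case True
        then show ?thesis using Inr sec_AB[OF assms(1) True, of False b1]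
            sec_AB[OF assms(2) True, of False b2] eq by simp
      next
        case False
        then show ?thesis using Inr unfolding second_nbhd_def by simp
      qed
    qed
  qed
  then show False using n2 assms ne by blast
qed

definition sig where "sig w = wof (f (AB False w))"

lemma f_AB': assumes "w \<in> W"
  obtains b' where "f (AB b w) = AB b' (sig w)" "sig w \<in> W"
proof -
  obtain b1 w1 where 1: "f (AB b w) = AB b1 w1" "w1 \<in> W" using f_AB[OF assms] by blast
  obtain b0 w0 where 0: "f (AB False w) = AB b0 w0" "w0 \<in> W" using f_AB[OF assms] by blast
  have "second_nbhd RV Adj (f (AB b w)) = second_nbhd RV Adj (f (AB False w))"
    using aut_second[OF aut] assms sec_same[OF assms, of b False] by simp
  then have "w1 = w0" using sec_det 0 1 by metis
  then show ?thesis using that 0 1 unfolding sig_def by simp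
qed

lemma sig_W: "w \<in> W \<Longrightarrow> sig w \<in> W" using f_AB' by metis

lemma sig_inj: "inj_on sig W"
proof (rule inj_onI)
  fix w1 w2 assume w: "w1 \<in> W" "w2 \<in> W" "sig w1 = sig w2"
  obtain b1 where b1: "f (AB False w1) = AB b1 (sig w1)" using f_AB'[OF w(1)] by metis
  obtain b1' where b1': "f (AB True w1) = AB b1' (sig w1)" using f_AB'[OF w(1)] by metis
  obtain b2 where b2: "f (AB False w2) = AB b2 (sig w2)" using f_AB'[OF w(2)] by metis
  have "b1 \<noteq> b1'" using b1 b1' aut_inj[OF aut, of "AB False w1" "AB True w1"] w by auto
  then have "f (AB False w2) = f (AB False w1) \<or> f (AB False w2) = f (AB True w1)"
    using b1 b1' b2 w(3) by (cases b2; cases b1; cases b1') auto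
  then show "w1 = w2" using aut_inj[OF aut] w by force
qed

lemma sig_img: "sig ` W = W"
  using endo_inj_surj[OF finW _ sig_inj] sig_W by blast

lemma NV_inj: assumes "v1 \<in> V" "v2 \<in> V" "NV E v1 = NV E v2" shows "v1 = v2"
proof -
  define h where "h z = (if z = Inl v1 then Inl v2 else if z = Inl v2 then Inl v1 else z)" for z :: "'v + 'w"
  have hh: "h (h z) = z" for z unfolding h_def by auto
  have hin: "h z \<in> GV" if "z \<in> GV" for z using that assms unfolding h_def by auto
  have "bij_betw h GV GV"
    by (rule bij_betw_byWitness[where f'=h]) (use hh hin in auto)
  moreover have "GA (h x) (h y) \<longleftrightarrow> GA x y" for x y
    using assms(3) unfolding h_def NV_def
    by (cases x; cases y) (auto simp: set_eq_iff)
  ultimately have "automorphism GV GA h" unfolding automorphism_def by simp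
  then have "h (Inl v1) = Inl v1" using rigG assms unfolding rigid_def by simp
  then show ?thesis unfolding h_def by (auto split: if_splits)
qed

lemma f_M_NV: assumes "v \<in> V" "even_vec x" "f (RM v x) = RM v' y" "v' \<in> V" "even_vec y"
  shows "NV E v' = sig ` NV E v"
proof -
  have "{z\<in>RV. Adj (RM v' y) z} = f ` {z\<in>RV. Adj (RM v x) z}"
    using aut_nbhd[OF aut, of "RM v x"] assms by simp
  then have "(\<lambda>j. AB (comp y j) (ord v' j)) ` {1,2,3} = f ` (\<lambda>j. AB (comp x j) (ord v j)) ` {1,2,3}"
    using nbhd_M assms by simp
  note eq1 = this
  have "wof ` ((\<lambda>j. AB (comp y j) (ord v' j)) ` {1,2,3} :: ('v,'w) rvert set) = wof ` f ` (\<lambda>j. AB (comp x j) (ord v j)) ` {1,2,3}"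
    by (simp only: eq1)
  moreover have "wof ` ((\<lambda>j. AB (comp y j) (ord v' j)) ` {1,2,3} :: ('v,'w) rvert set) = NV E v'"
    using ordA assms(4) by (simp add: image_image)
  moreover have "wof ` f ` (\<lambda>j. AB (comp x j) (ord v j)) ` {1,2,3} = sig ` NV E v"
  proof -
    have "wof (f (AB (comp x j) (ord v j))) = sig (ord v j)" if "j \<in> {1,2,3}" for j
      using f_AB'[OF ord_W[OF assms(1) that], of "comp x j"] by (metis wof_AB)
    then have "wof ` f ` (\<lambda>j. AB (comp x j) (ord v j)) ` {1,2,3} = sig ` ord v ` {1,2,3}"
      by (simp add: image_image)
    moreover have NVe: "NV E v = ord v ` {1,2,3}" using ordA assms(1) by simp
    ultimately show ?thesis by simp
  qed
  ultimately show ?thesis by simp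
qed

definition tau where "tau v = vof (f (RM v (False,False,False)))"

lemma tau_prop: assumes "v \<in> V" shows "tau v \<in> V" "NV E (tau v) = sig ` NV E v"
proof -
  obtain v' y where vy: "f (RM v (False,False,False)) = RM v' y" "v' \<in> V" "even_vec y"
    using f_M[OF assms even0] by blast
  then show "tau v \<in> V" "NV E (tau v) = sig ` NV E v"
    using f_M_NV[OF assms even0 vy] unfolding tau_def by simp_all
qed

lemma tau_inj: "inj_on tau V"
proof (rule inj_onI)
  fix v1 v2 assume v: "v1 \<in> V" "v2 \<in> V" "tau v1 = tau v2"
  then have "sig ` NV E v1 = sig ` NV E v2" using tau_prop by metis
  then have "NV E v1 = NV E v2" using inj_on_image_eq_iff[OF sig_inj NV_sub NV_sub] by simp
  then show "v1 = v2" using NV_inj v by blast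
qed

lemma tau_img: "tau ` V = V"
  using endo_inj_surj[OF finV _ tau_inj] tau_prop by blast

lemma g_aut: "automorphism GV GA (map_sum tau sig)"
proof -
  have "inj_on (map_sum tau sig) GV"
  proof (rule inj_onI)
    fix a b assume ab: "a \<in> GV" "b \<in> GV" "map_sum tau sig a = map_sum tau sig b"
    show "a = b" using ab inj_onD[OF tau_inj] inj_onD[OF sig_inj] by (cases a; cases b) simp_all
  qed
  moreover have "map_sum tau sig ` GV = GV"
  proof -
    have 1: "map_sum tau sig ` Inl ` V = Inl ` (tau ` V)" by (simp add: image_image)
    have 2: "map_sum tau sig ` Inr ` W = Inr ` (sig ` W)" by (simp add: image_image)
    show ?thesis unfolding bip_verts_def image_Un 1 2 tau_img sig_img ..
  qed
  ultimately have "bij_betw (map_sum tau sig) GV GV" unfolding bij_betw_def by simp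
  moreover have "GA (map_sum tau sig x) (map_sum tau sig y) \<longleftrightarrow> GA x y" if "x \<in> GV" "y \<in> GV" for x y
  proof -
    have key: "(tau v, sig w) \<in> E \<longleftrightarrow> (v, w) \<in> E" if "v \<in> V" "w \<in> W" for v w
    proof -
      have "(tau v, sig w) \<in> E \<longleftrightarrow> sig w \<in> sig ` NV E v"
        using inE[of "tau v" "sig w"] tau_prop[OF that(1)] by simp
      also have "\<dots> \<longleftrightarrow> w \<in> NV E v" using inj_on_image_mem_iff[OF sig_inj that(2) NV_sub] .
      finally show ?thesis using inE[of v w] that by simp
    qed
    show ?thesis using that key by (cases x; cases y) simp_all
  qed
  ultimately show ?thesis unfolding automorphism_def by simp
qed

lemma sig_id: assumes "w \<in> W" shows "sig w = w"
proof -
  have "\<forall>z\<in>GV. map_sum tau sig z = z" using g_aut rigG unfolding rigid_def by blast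
  moreover have "Inr w \<in> GV" using assms by simp
  ultimately have "map_sum tau sig (Inr w) = Inr w" by blast
  then show ?thesis by simp
qed

lemma tau_id: assumes "v \<in> V" shows "tau v = v"
proof -
  have "\<forall>z\<in>GV. map_sum tau sig z = z" using g_aut rigG unfolding rigid_def by blast
  moreover have "Inl v \<in> GV" using assms by simp
  ultimately have "map_sum tau sig (Inl v) = Inl v" by blast
  then show ?thesis by simp
qed

definition flipped where "flipped w \<longleftrightarrow> f (AB False w) = AB True w"

lemma f_AB_flip: assumes "w \<in> W" shows "f (AB b w) = AB (b \<noteq> flipped w) w"
proof -
  obtain b0 where b0: "f (AB False w) = AB b0 w" using f_AB'[OF assms] sig_id[OF assms] by metis
  obtain b1 where b1: "f (AB True w) = AB b1 w" using f_AB'[OF assms] sig_id[OF assms] by metis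
  have "b1 \<noteq> b0" using b0 b1 aut_inj[OF aut, of "AB False w" "AB True w"] assms by auto
  then show ?thesis using b0 b1 unfolding flipped_def by (cases b) auto
qed

lemma f_M_flip: assumes "v \<in> V" "even_vec x"
  obtains y where "f (RM v x) = RM v y" "even_vec y"
    "\<forall>j\<in>{1,2,3}. comp y j = (comp x j \<noteq> flipped (ord v j))"
proof -
  obtain v' y where vy: "f (RM v x) = RM v' y" "v' \<in> V" "even_vec y"
    using f_M[OF assms] by blast
  have "NV E v' = sig ` NV E v" using f_M_NV[OF assms vy] .
  also have "\<dots> = NV E v" using sig_id NV_sub by (metis image_cong image_ident subset_iff)
  finally have "v' = v" using NV_inj assms vy by blast
  have "comp y j = (comp x j \<noteq> flipped (ord v j))" if j: "j \<in> {1,2,3}" for j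
  proof -
    have w: "ord v j \<in> W" using ord_W[OF assms(1) j] .
    have "Adj (RM v x) (AB (comp x j) (ord v j))" using j by auto
    then have "Adj (f (RM v x)) (f (AB (comp x j) (ord v j)))"
      using aut_adj[OF aut] assms w by simp
    then have "Adj (RM v y) (AB (comp x j \<noteq> flipped (ord v j)) (ord v j))"
      using vy \<open>v' = v\<close> f_AB_flip[OF w] by simp
    then obtain k where "k \<in> {1,2,3}" "ord v k = ord v j" "comp y k = (comp x j \<noteq> flipped (ord v j))"
      by auto
    then show ?thesis using ord_inj[OF assms(1) _ j] by metis
  qed
  then show ?thesis using that vy \<open>v' = v\<close> by blast
qed

lemma no_flip: "w \<in> W \<Longrightarrow> \<not> flipped w"
proof -
  define X where "X = {w\<in>W. flipped w}"
  have ev: "even (card (X \<inter> NV E v))" if v: "v \<in> V" for v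
  proof -
    obtain y where y: "even_vec y" "\<forall>j\<in>{1,2,3}. comp y j = (comp (False,False,False) j \<noteq> flipped (ord v j))"
      using f_M_flip[OF v even0] by blast
    have e: "even (card {j\<in>{1,2,3::nat}. flipped (ord v j)})"
      using parity_vec[OF even0 y(1) y(2)] .
    have NVe: "NV E v = ord v ` {1,2,3}" using ordA v by simp
    have "inj_on (ord v) {1,2,3}" using ordA v by simp
    then have inj: "inj_on (ord v) {j\<in>{1,2,3::nat}. flipped (ord v j)}" by (rule inj_on_subset) auto
    have "X \<inter> NV E v = ord v ` {j\<in>{1,2,3::nat}. flipped (ord v j)}"
      unfolding NVe X_def using ord_W[OF v] by auto
    then show ?thesis using e card_image[OF inj] by simp
  qed
  have "X = {}"
  proof (rule ccontr)
    assume ne: "X \<noteq> {}"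
    have sub: "X \<subseteq> W" unfolding X_def by blast
    have "\<exists>v\<in>V. odd (card (X \<inter> NV E v))"
      using oddG[unfolded odd_bip_def, rule_format, of X] sub ne by blast
    then obtain v where "v \<in> V" "odd (card (X \<inter> NV E v))" by blast
    then show False using ev by blast
  qed
  then show "w \<in> W \<Longrightarrow> \<not> flipped w" unfolding X_def by blast
qed

lemma f_id: "u \<in> RV \<Longrightarrow> f u = u"
proof (cases u rule: rvert_cases)
  case (1 b w)
  assume "u \<in> RV"
  then show ?thesis using 1 f_AB_flip no_flip by simp
next
  case (2 v x)
  assume "u \<in> RV"
  then have vx: "v \<in> V" "even_vec x" using 2 by auto
  obtain y where y: "f (RM v x) = RM v y" "\<forall>j\<in>{1,2,3}. comp y j = (comp x j \<noteq> flipped (ord v j))"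
    using f_M_flip[OF vx] by blast
  have "\<forall>j\<in>{1,2,3}. comp y j = comp x j" using y(2) no_flip ord_W[OF vx(1)] by simp
  then have "y = x" using comp_ext by metis
  then show ?thesis using 2 y by simp
qed

end

theorem mainTheorem2:
  fixes V :: "'v set" and W :: "'w set" and E :: "('v \<times> 'w) set"
    and ord :: "'v \<Rightarrow> nat \<Rightarrow> 'w"
  assumes "finite V" and "finite W" and "E \<subseteq> V \<times> W"
    and "\<forall>v\<in>V. card (NV E v) = 3"
    and "\<forall>v\<in>V. inj_on (ord v) {1,2,3} \<and> ord v ` {1,2,3} = NV E v"
    and "odd_bip V W E"
    and "rigid (bip_verts V W) (bip_adj E)"
    and "\<forall>w1\<in>W. \<forall>w2\<in>W. w1 \<noteq> w2 \<longrightarrow>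
           second_nbhd (bip_verts V W) (bip_adj E) (Inr w1)
             \<noteq> second_nbhd (bip_verts V W) (bip_adj E) (Inr w2)"
  shows "rigid (R_verts V W) (R_adj ord)"
  unfolding rigid_def
proof (intro allI impI)
  fix f assume a: "automorphism (R_verts V W) (R_adj ord) f"
  interpret setting V W E ord f
    using assms(1,2,3,5,6,7,8) a by (rule setting.intro)
  show "\<forall>x\<in>R_verts V W. f x = x" using f_id by blast
qed

end
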